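(* Let $s,t,p\ge 1$, $A,B\in GL(n)$ and $Q\in\mathcal{P}(n)$ with $\lambda_1(Q)\le 1$. If the equation $X^s+A^*X^{-t}A+B^*X^{-p}B=Q$ has a Hermitian positive definite solution, then $$\rho^2(A)<\frac{q^q}{(q+1)^{q+1}}\quad\text{and}\quad \rho^2(B)<\frac{q^q}{(q+1)^{q+1}},\qquad\text{where } q=\min\{t/s,\,p/s\}.$$
   Context: $GL(n)$: $n\times n$ complex nonsingular matrices; $\mathcal{P}(n)$: $n\times n$ Hermitian positive definite matrices. For a Hermitian matrix $M$, $\lambda_1(M)$ is its largest and $\lambda_n(M)$ its smallest eigenvalue. $\rho(M)$ is the spectral radius. Real powers of positive definite matrices are defined by functional calculus. *)

theory Defs
  imports "Jordan_Normal_Form.Spectral_Radius" "Jordan_Normal_Form.Schur_Decomposition"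
begin

definition hermitian_mat :: "complex mat \<Rightarrow> bool" where
  "hermitian_mat A \<longleftrightarrow> mat_adjoint A = A"

definition pd_mat :: "nat \<Rightarrow> complex mat \<Rightarrow> bool" where
  "pd_mat n A \<longleftrightarrow> A \<in> carrier_mat n n \<and> hermitian_mat A \<and>
     (\<forall>v \<in> carrier_vec n. v \<noteq> 0\<^sub>v n \<longrightarrow> Re (conjugate v \<bullet> (A *\<^sub>v v)) > 0)"

definition gl_mat :: "nat \<Rightarrow> complex mat \<Rightarrow> bool" where
  "gl_mat n A \<longleftrightarrow> A \<in> carrier_mat n n \<and> invertible_mat A"

definition unitary_mat :: "nat \<Rightarrow> complex mat \<Rightarrow> bool" where
  "unitary_mat n U \<longleftrightarrow> U \<in> carrier_mat n n \<and> mat_adjoint U * U = 1\<^sub>m n"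

definition mat_powr :: "nat \<Rightarrow> complex mat \<Rightarrow> real \<Rightarrow> complex mat" where
  "mat_powr n X r = (SOME Y. \<exists>U d. unitary_mat n U \<and> (\<forall>i<n. d i > 0) \<and>
      X = U * mat_diag n (\<lambda>i. complex_of_real (d i)) * mat_adjoint U \<and>
      Y = U * mat_diag n (\<lambda>i. complex_of_real (d i powr r)) * mat_adjoint U)"

definition lambda_max :: "complex mat \<Rightarrow> real" where
  "lambda_max M = Max (Re ` spectrum M)"

end

theory Submission
  imports Defs
begin


lemma mat_adjoint_alt: "mat_adjoint (A :: complex mat) = mat (dim_col A) (dim_row A) (\<lambda>(i,j). cnj (A $$ (j,i)))"
  unfolding mat_adjoint_def
  by (rule eq_matI) (auto simp: mat_of_rows_def)

lemma adjoint_carrier[simp]: "(A :: complex mat) \<in> carrier_mat n m \<Longrightarrow> mat_adjoint A \<in> carrier_mat m n"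
  by (auto simp: mat_adjoint_alt)

lemma adjoint_dim[simp]: "dim_row (mat_adjoint (A :: complex mat)) = dim_col A"
  "dim_col (mat_adjoint (A :: complex mat)) = dim_row A"
  by (auto simp: mat_adjoint_alt)

lemma adjoint_index[simp]: "i < dim_col A \<Longrightarrow> j < dim_row A \<Longrightarrow> mat_adjoint (A :: complex mat) $$ (i,j) = cnj (A $$ (j,i))"
  by (auto simp: mat_adjoint_alt)

lemma adjoint_adjoint[simp]: "mat_adjoint (mat_adjoint (A :: complex mat)) = A"
  by (rule eq_matI) auto

lemma adjoint_mult: assumes "(A :: complex mat) \<in> carrier_mat n m" "B \<in> carrier_mat m k"
  shows "mat_adjoint (A * B) = mat_adjoint B * mat_adjoint A"
  using assms by (intro eq_matI) (auto simp: scalar_prod_def mult.commute)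

lemma adjoint_add: assumes "(A :: complex mat) \<in> carrier_mat n m" "B \<in> carrier_mat n m"
  shows "mat_adjoint (A + B) = mat_adjoint A + mat_adjoint B"
  using assms by (intro eq_matI) auto

lemma adjoint_one[simp]: "mat_adjoint (1\<^sub>m n :: complex mat) = 1\<^sub>m n"
  by (intro eq_matI) auto

lemma adjoint_diag: "mat_adjoint (mat_diag n (\<lambda>i. complex_of_real (d i))) = mat_diag n (\<lambda>i. complex_of_real (d i))"
  by (intro eq_matI) (auto simp: mat_diag_def)

lemma adjoint_vec: assumes "(A :: complex mat) \<in> carrier_mat n m" "x \<in> carrier_vec m" "y \<in> carrier_vec n"
  shows "conjugate x \<bullet> (mat_adjoint A *\<^sub>v y) = conjugate (A *\<^sub>v x) \<bullet> y"
proof -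
  have "conjugate x \<bullet> (mat_adjoint A *\<^sub>v y) = (\<Sum>i<m. cnj (x $ i) * (\<Sum>j<n. cnj (A $$ (j,i)) * y $ j))"
    using assms by (auto simp: scalar_prod_def row_def atLeast0LessThan)
  also have "\<dots> = (\<Sum>i<m. \<Sum>j<n. cnj (x $ i) * cnj (A $$ (j,i)) * y $ j)"
    by (simp add: sum_distrib_left mult.assoc)
  also have "\<dots> = (\<Sum>j<n. \<Sum>i<m. cnj (x $ i) * cnj (A $$ (j,i)) * y $ j)"
    by (rule sum.swap)
  also have "\<dots> = (\<Sum>j<n. cnj (\<Sum>i<m. A $$ (j,i) * x $ i) * y $ j)"
    by (simp add: sum_distrib_left sum_distrib_right mult_ac)
  also have "\<dots> = conjugate (A *\<^sub>v x) \<bullet> y"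
    using assms by (auto simp: scalar_prod_def row_def atLeast0LessThan)
  finally show ?thesis .
qed



lemma cself_real: "(v :: complex vec) \<bullet>c v = complex_of_real (\<Sum>i<dim_vec v. (cmod (v$i))^2)"
proof -
  have "v \<bullet>c v = (\<Sum>i<dim_vec v. v $ i * cnj (v $ i))" by (simp add: scalar_prod_def atLeast0LessThan)
  also have "\<dots> = (\<Sum>i<dim_vec v. complex_of_real ((cmod (v$i))^2))"
    by (rule sum.cong) (auto simp: complex_mult_cnj cmod_power2)
  also have "\<dots> = complex_of_real (\<Sum>i<dim_vec v. (cmod (v$i))^2)" by (rule of_real_sum[symmetric])
  finally show ?thesis .
qed

definition nv :: "complex vec \<Rightarrow> complex vec" where
  "nv w = (1 / complex_of_real (sqrt (Re (w \<bullet>c w)))) \<cdot>\<^sub>v w"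

lemma nv_carrier[simp]: "w \<in> carrier_vec n \<Longrightarrow> nv w \<in> carrier_vec n"
  by (simp add: nv_def)

lemma nv_dim[simp]: "dim_vec (nv w) = dim_vec w" by (simp add: nv_def)

lemma nv_sprod: assumes "w \<in> carrier_vec n" "w' \<in> carrier_vec n"
  shows "nv w \<bullet>c nv w' = complex_of_real (1 / sqrt (Re (w \<bullet>c w)) * (1 / sqrt (Re (w' \<bullet>c w')))) * (w \<bullet>c w')"
  using assms unfolding nv_def
  by (simp add: conjugate_smult_vec)

lemma nv_self: assumes "w \<in> carrier_vec n" "w \<bullet>c w \<noteq> 0"
  shows "nv w \<bullet>c nv w = 1"
proof -
  let ?r = "\<Sum>i<dim_vec w. (cmod (w$i))^2"
  have r: "w \<bullet>c w = complex_of_real ?r" by (rule cself_real)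
  have "?r \<ge> 0" by (intro sum_nonneg) auto
  moreover have "?r \<noteq> 0" proof assume "?r = 0" hence "w \<bullet>c w = 0" unfolding r by (metis of_real_0) thus False using assms(2) by auto qed
  ultimately have rp: "?r > 0" by linarith
  have e: "Re (w \<bullet>c w) = ?r" using r by simp
  have "1 / sqrt ?r * (1 / sqrt ?r) * ?r = 1" using rp
    by (simp add: field_simps)
  hence "complex_of_real (1 / sqrt ?r * (1 / sqrt ?r)) * complex_of_real ?r = 1"
    by (metis of_real_1 of_real_mult)
  thus ?thesis unfolding nv_sprod[OF assms(1) assms(1)] e by (simp add: r)
qed

lemma nv_id: assumes "w \<bullet>c w = 1" shows "nv w = w"
  unfolding nv_def assms by simp

lemma unitary_completion:
  assumes u: "u \<in> carrier_vec n" and uu: "u \<bullet>c u = 1"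
  shows "\<exists>W. unitary_mat n W \<and> col W 0 = u"
proof -
  have u0: "u \<noteq> 0\<^sub>v n" using uu u by auto
  have n: "n > 0" using u0 u by (cases n) auto
  interpret cof_vec_space n "TYPE(complex)" .
  define b where "b = basis_completion u"
  from basis_completion[OF u u0, folded b_def]
  have dist_b: "distinct b" and indep: "\<not> lin_dep (set b)" and b: "set b \<subseteq> carrier_vec n" 
    and hdb: "hd b = u" and len_b: "length b = n" by auto
  from hdb len_b n obtain vs where bv: "b = u # vs" by (cases b, auto)
  define ws where "ws = gram_schmidt n b"
  from gram_schmidt_result[OF b dist_b indep refl, folded ws_def]
  have ws: "set ws \<subseteq> carrier_vec n" "corthogonal ws" "length ws = n" 
    by (auto simp: len_b)
  from gram_schmidt_hd[OF u, of vs, folded bv] have hdws: "hd ws = u" unfolding ws_def .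
  define us where "us = map nv ws"
  define W where "W = mat_of_cols n us"
  have W: "W \<in> carrier_mat n n" unfolding W_def us_def using ws by auto
  have dimws: "i < length ws \<Longrightarrow> dim_vec (ws ! i) = length ws" for i using ws(1) ws(3) nth_mem[of i ws] by (metis carrier_vecD subsetD)
  have wsi: "i < n \<Longrightarrow> ws ! i \<in> carrier_vec n" for i using ws by auto
  have orth: "i < n \<Longrightarrow> j < n \<Longrightarrow> us ! j \<bullet>c us ! i = (if i = j then 1 else 0)" for i j
  proof -
    assume i: "i < n" and j: "j < n"
    show ?thesis
    proof (cases "i = j")
      case True
      thus ?thesis unfolding us_def using i ws nv_self[OF wsi[OF i]] corthogonalD[OF ws(2), of i i] by auto
    next
      case False
      thus ?thesis unfolding us_def using i j ws nv_sprod[OF wsi[OF j] wsi[OF i]] corthogonalD[OF ws(2), of j i] by auto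
    qed
  qed
  have "mat_adjoint W * W = 1\<^sub>m n"
  proof (rule eq_matI)
    fix i j assume i: "i < dim_row (1\<^sub>m n :: complex mat)" and j: "j < dim_col (1\<^sub>m n :: complex mat)"
    have "(mat_adjoint W * W) $$ (i,j) = us ! j \<bullet>c us ! i"
      using i j W ws unfolding W_def us_def
      by (auto simp: scalar_prod_def mat_of_cols_index mult.commute dimws intro!: sum.cong)
    thus "(mat_adjoint W * W) $$ (i,j) = 1\<^sub>m n $$ (i,j)" using orth i j by auto
  qed (use W in auto)
  moreover have "col W 0 = u"
  proof -
    have "ws ! 0 = u" using hdws ws n by (cases ws) auto
    hence "us ! 0 = u" unfolding us_def using n ws nv_id[OF uu] by auto
    moreover have "us ! 0 \<in> carrier_vec n" unfolding us_def using n ws wsi[of 0] by simp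
    ultimately show ?thesis unfolding W_def using n ws us_def by (subst col_mat_of_cols) auto
  qed
  ultimately show ?thesis using W unfolding unitary_mat_def by blast
qed



lemma triple_index: assumes U: "(U :: complex mat) \<in> carrier_mat r n" and V: "V \<in> carrier_mat c n"
  and i: "i < r" and j: "j < c"
  shows "(U * mat_diag n f * mat_adjoint V) $$ (i,j) = (\<Sum>k<n. U$$(i,k) * f k * cnj (V$$(j,k)))"
  using U V i j by (simp add: mat_diag_mult_right[OF U] scalar_prod_def atLeast0LessThan)

lemma adj_prod_index: assumes W: "(W :: complex mat) \<in> carrier_mat n m" and M: "M \<in> carrier_mat n n"
  and i: "i < m" and j: "j < m"
  shows "(mat_adjoint W * M * W) $$ (i,j) = conjugate (col W i) \<bullet> (M *\<^sub>v col W j)"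
proof -
  have "mat_adjoint W * M * W = mat_adjoint W * (M * W)" using W M by (auto intro!: assoc_mult_mat)
  moreover have "row (mat_adjoint W) i = conjugate (col W i)" using W i by (auto intro!: eq_vecI)
  moreover have "col (M * W) j = M *\<^sub>v col W j" by (rule col_mult2[OF M W j])
  moreover have "(mat_adjoint W * (M * W)) $$ (i,j) = row (mat_adjoint W) i \<bullet> col (M * W) j"
    using W M i j by (intro index_mult_mat) auto
  ultimately show ?thesis by simp
qed

lemma unitary_right: assumes "unitary_mat n U" shows "U * mat_adjoint U = 1\<^sub>m n"
  using assms unfolding unitary_mat_def by (auto intro: mat_mult_left_right_inverse)

lemma unitary_carrier: "unitary_mat n U \<Longrightarrow> U \<in> carrier_mat n n"
  unfolding unitary_mat_def by auto

lemma unitary_left: "unitary_mat n U \<Longrightarrow> mat_adjoint U * U = 1\<^sub>m n"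
  unfolding unitary_mat_def by auto

lemma assoc5: assumes P: "(P :: 'a :: comm_ring mat) \<in> carrier_mat n n" and Q: "Q \<in> carrier_mat n n"
  and R: "R \<in> carrier_mat n n" and S: "S \<in> carrier_mat n n" and T: "T \<in> carrier_mat n n"
  shows "P * (Q * R * S) * T = (P * Q) * R * (S * T)"
proof -
  have QR: "Q * R \<in> carrier_mat n n" using Q R by simp
  have QRS: "Q * R * S \<in> carrier_mat n n" using QR S by simp
  have ST: "S * T \<in> carrier_mat n n" using S T by simp
  have "P * (Q * R * S) * T = P * ((Q * R * S) * T)" by (rule assoc_mult_mat[OF P QRS T])
  also have "(Q * R * S) * T = (Q * R) * (S * T)" by (rule assoc_mult_mat[OF QR S T])
  also have "P * ((Q * R) * (S * T)) = (P * (Q * R)) * (S * T)" by (rule assoc_mult_mat[OF P QR ST, symmetric])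
  also have "P * (Q * R) = (P * Q) * R" by (rule assoc_mult_mat[OF P Q R, symmetric])
  finally show ?thesis .
qed

lemma spectral:
  assumes "(A :: complex mat) \<in> carrier_mat n n" "hermitian_mat A"
  shows "\<exists>U d. unitary_mat n U \<and> A = U * mat_diag n (\<lambda>i. complex_of_real (d i)) * mat_adjoint U"
  using assms
proof (induction n arbitrary: A)
  case 0
  show ?case
    by (rule exI[of _ "1\<^sub>m 0"], rule exI[of _ "\<lambda>_. 0"]) (use 0 in \<open>auto simp: unitary_mat_def intro!: eq_matI\<close>)
next
  case (Suc m A)
  define n where "n = Suc m"
  have A: "A \<in> carrier_mat n n" using Suc n_def by auto
  have herm: "mat_adjoint A = A" using Suc unfolding hermitian_mat_def by auto
  obtain e where "e \<in> spectrum A" using spectrum_non_empty[OF A] n_def by auto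
  then obtain v where v: "v \<in> carrier_vec n" "v \<noteq> 0\<^sub>v n" "A *\<^sub>v v = e \<cdot>\<^sub>v v"
    unfolding spectrum_def eigenvalue_def eigenvector_def using A by auto
  define u where "u = nv v"
  have u: "u \<in> carrier_vec n" unfolding u_def using v by simp
  have vv: "v \<bullet>c v \<noteq> 0" using v by simp
  have uu: "u \<bullet>c u = 1" unfolding u_def by (rule nv_self[OF v(1) vv])
  have Au: "A *\<^sub>v u = e \<cdot>\<^sub>v u" unfolding u_def nv_def using v A
    by (simp add: mult_mat_vec[OF A v(1)] smult_smult_assoc mult.commute)
  obtain W where Wu: "unitary_mat n W" "col W 0 = u" using unitary_completion[OF u uu] by auto
  have W: "W \<in> carrier_mat n n" using Wu unitary_carrier by auto
  have WW: "mat_adjoint W * W = 1\<^sub>m n" using Wu unitary_left by auto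
  have WW': "W * mat_adjoint W = 1\<^sub>m n" using Wu unitary_right by auto
  define A' where "A' = mat_adjoint W * A * W"
  have A': "A' \<in> carrier_mat n n" unfolding A'_def using W A by auto
  have hA': "mat_adjoint A' = A'"
  proof -
    have "mat_adjoint A' = mat_adjoint W * mat_adjoint (mat_adjoint W * A)"
      unfolding A'_def by (rule adjoint_mult[of _ n n _ n]) (use W A in auto)
    also have "mat_adjoint (mat_adjoint W * A) = mat_adjoint A * mat_adjoint (mat_adjoint W)"
      by (rule adjoint_mult[of _ n n _ n]) (use W A in auto)
    also have "mat_adjoint W * (mat_adjoint A * mat_adjoint (mat_adjoint W)) = A'"
      unfolding A'_def herm adjoint_adjoint using W A by (auto intro!: assoc_mult_mat[symmetric])
    finally show ?thesis .
  qed
  have hent: "i < n \<Longrightarrow> j < n \<Longrightarrow> A' $$ (i,j) = cnj (A' $$ (j,i))" for i j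
    using arg_cong[OF hA', of "\<lambda>M. M $$ (i,j)"] A' by simp
  have WWi: "i < n \<Longrightarrow> j < n \<Longrightarrow> conjugate (col W i) \<bullet> col W j = (if i = j then 1 else 0)" for i j
    using adj_prod_index[OF W one_carrier_mat, of i j] WW W by auto
  have col0: "i < n \<Longrightarrow> A' $$ (i,0) = (if i = 0 then e else 0)" for i
    unfolding A'_def using adj_prod_index[OF W A, of i 0] W WWi[of i 0] Au Wu n_def
    by (auto simp: scalar_prod_smult_distrib[of _ n])
  have ereal: "cnj e = e" using hent[of 0 0] col0[of 0] n_def by auto
  have row0: "j < n \<Longrightarrow> A' $$ (0,j) = (if j = 0 then e else 0)" for j
    using hent[of 0 j] col0[of j] ereal n_def by auto
  define A3 where "A3 = mat m m (\<lambda>(i,j). A' $$ (Suc i, Suc j))"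
  have A3: "A3 \<in> carrier_mat m m" unfolding A3_def by simp
  have hA3: "hermitian_mat A3" unfolding hermitian_mat_def A3_def
    by (rule eq_matI) (auto simp: n_def hent[symmetric])
  from Suc.IH[OF A3 hA3] obtain U3 d3 where U3: "unitary_mat m U3"
    and A3eq: "A3 = U3 * mat_diag m (\<lambda>i. complex_of_real (d3 i)) * mat_adjoint U3" by auto
  have U3c: "U3 \<in> carrier_mat m m" using U3 unitary_carrier by auto
  have U3U3: "mat_adjoint U3 * U3 = 1\<^sub>m m" using U3 unitary_left by auto
  define B where "B = mat n n (\<lambda>(i,j). if i = 0 then (if j = 0 then 1 else 0) else if j = 0 then 0 else U3 $$ (i - 1, j - 1))"
  define d where "d = (\<lambda>i. if i = 0 then Re e else d3 (i - 1))"
  have B: "B \<in> carrier_mat n n" unfolding B_def by simp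
  have BB: "mat_adjoint B * B = 1\<^sub>m n"
  proof (rule eq_matI)
    fix i j assume i: "i < dim_row (1\<^sub>m n :: complex mat)" and j: "j < dim_col (1\<^sub>m n :: complex mat)"
    have "(mat_adjoint B * B) $$ (i,j) = (\<Sum>k<n. cnj (B$$(k,i)) * B$$(k,j))"
      using B i j by (simp add: scalar_prod_def atLeast0LessThan)
    also have "\<dots> = cnj (B$$(0,i)) * B$$(0,j) + (\<Sum>k<m. cnj (B$$(Suc k,i)) * B$$(Suc k,j))"
      unfolding n_def by (rule sum.lessThan_Suc_shift)
    also have "\<dots> = 1\<^sub>m n $$ (i,j)"
    proof (cases i)
      case 0 thus ?thesis using i j unfolding B_def n_def by (cases j) auto
    next
      case (Suc i')
      show ?thesis
      proof (cases j)
        case 0 thus ?thesis using i j Suc unfolding B_def n_def by auto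
      next
        case (Suc j')
        have "(\<Sum>k<m. cnj (B$$(Suc k,i)) * B$$(Suc k,j)) = (\<Sum>k<m. cnj (U3$$(k,i')) * U3$$(k,j'))"
          using i j \<open>i = Suc i'\<close> Suc unfolding B_def n_def by (intro sum.cong) auto
        also have "\<dots> = (mat_adjoint U3 * U3) $$ (i',j')"
          using U3c i j \<open>i = Suc i'\<close> Suc n_def by (simp add: scalar_prod_def atLeast0LessThan)
        finally show ?thesis using U3U3 i j \<open>i = Suc i'\<close> Suc unfolding B_def n_def by auto
      qed
    qed
    finally show "(mat_adjoint B * B) $$ (i,j) = 1\<^sub>m n $$ (i,j)" .
  qed (use B in auto)
  have BDB: "B * mat_diag n (\<lambda>i. complex_of_real (d i)) * mat_adjoint B = A'"
  proof (rule eq_matI)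
    fix i j assume i: "i < dim_row A'" and j: "j < dim_col A'"
    have "(B * mat_diag n (\<lambda>i. complex_of_real (d i)) * mat_adjoint B) $$ (i,j)
       = (\<Sum>k<n. B$$(i,k) * complex_of_real (d k) * cnj (B$$(j,k)))"
      using B A' i j by (intro triple_index) auto
    also have "\<dots> = B$$(i,0) * complex_of_real (d 0) * cnj (B$$(j,0)) + (\<Sum>k<m. B$$(i,Suc k) * complex_of_real (d (Suc k)) * cnj (B$$(j,Suc k)))"
      unfolding n_def by (rule sum.lessThan_Suc_shift)
    also have "\<dots> = A' $$ (i,j)"
    proof (cases i)
      case 0 thus ?thesis using i j A' row0 ereal unfolding B_def n_def d_def
        by (cases j) (auto simp: complex_eq_iff)
    next
      case (Suc i')
      show ?thesis
      proof (cases j)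
        case 0 thus ?thesis using i j A' Suc col0 unfolding B_def n_def by auto
      next
        case (Suc j')
        have "(\<Sum>k<m. B$$(i,Suc k) * complex_of_real (d (Suc k)) * cnj (B$$(j,Suc k)))
          = (\<Sum>k<m. U3$$(i',k) * complex_of_real (d3 k) * cnj (U3$$(j',k)))"
          using i j A' \<open>i = Suc i'\<close> Suc unfolding B_def n_def d_def by (intro sum.cong) auto
        also have "\<dots> = A3 $$ (i', j')" unfolding A3eq
          using U3c i j A' \<open>i = Suc i'\<close> Suc n_def by (intro triple_index[symmetric]) auto
        also have "\<dots> = A' $$ (i,j)" unfolding A3_def using i j A' \<open>i = Suc i'\<close> Suc n_def by auto
        finally show ?thesis using i j A' \<open>i = Suc i'\<close> Suc unfolding B_def n_def by auto
      qed
    qed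
    finally show "(B * mat_diag n (\<lambda>i. complex_of_real (d i)) * mat_adjoint B) $$ (i,j) = A' $$ (i,j)" .
  qed (use B A' in auto)
  define D where "D = mat_diag n (\<lambda>i. complex_of_real (d i))"
  have D: "D \<in> carrier_mat n n" unfolding D_def by simp
  have adjWB: "mat_adjoint (W * B) = mat_adjoint B * mat_adjoint W" by (rule adjoint_mult[OF W B])
  have "mat_adjoint (W * B) * (W * B) = mat_adjoint B * ((mat_adjoint W * W) * B)"
    unfolding adjWB
  proof -
    have Ba: "mat_adjoint B \<in> carrier_mat n n" and Wa: "mat_adjoint W \<in> carrier_mat n n" using W B by auto
    have WB: "W * B \<in> carrier_mat n n" using W B by simp
    show "mat_adjoint B * mat_adjoint W * (W * B) = mat_adjoint B * (mat_adjoint W * W * B)"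
      unfolding assoc_mult_mat[OF Ba Wa WB] assoc_mult_mat[OF Wa W B] ..
  qed
  also have "\<dots> = 1\<^sub>m n" unfolding WW left_mult_one_mat[OF B] by (rule BB)
  finally have U: "unitary_mat n (W * B)" unfolding unitary_mat_def using mult_carrier_mat[OF W B] by blast
  have "A = (W * mat_adjoint W) * A * (W * mat_adjoint W)" unfolding WW' using A by simp
  also have "\<dots> = W * A' * mat_adjoint W"
  proof -
    have Wa: "mat_adjoint W \<in> carrier_mat n n" using W by simp
    have WaA: "mat_adjoint W * A \<in> carrier_mat n n" using Wa A by simp
    have 1: "(W * mat_adjoint W) * A = W * (mat_adjoint W * A)" by (rule assoc_mult_mat[OF W Wa A])
    have 2: "(W * (mat_adjoint W * A)) * (W * mat_adjoint W) = ((W * (mat_adjoint W * A)) * W) * mat_adjoint W"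
      using assoc_mult_mat[OF mult_carrier_mat[OF W WaA] W Wa] by simp
    have 3: "(W * (mat_adjoint W * A)) * W = W * A'" unfolding A'_def by (rule assoc_mult_mat[OF W WaA W])
    show ?thesis unfolding 1 2 3 ..
  qed
  also have "\<dots> = W * (B * D * mat_adjoint B) * mat_adjoint W" unfolding BDB[folded D_def] ..
  also have "\<dots> = (W * B) * D * mat_adjoint (W * B)" unfolding adjWB
    by (rule assoc5[OF W B D _ adjoint_carrier[OF W]]) (use B in simp)
  finally show ?case using U unfolding D_def n_def by blast
qed



lemma sq_mult: "A \<in> carrier_mat n n \<Longrightarrow> B \<in> carrier_mat n n \<Longrightarrow> A * B \<in> carrier_mat n n" by simp
lemma sq_adj: "(A :: complex mat) \<in> carrier_mat n n \<Longrightarrow> mat_adjoint A \<in> carrier_mat n n" by simp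
lemma sq_diag: "mat_diag n f \<in> carrier_mat n n" by simp

lemma funcal_unique:
  assumes U: "unitary_mat n U" and V: "unitary_mat n V"
    and eq: "U * mat_diag n (\<lambda>i. complex_of_real (d1 i)) * mat_adjoint U = V * mat_diag n (\<lambda>i. complex_of_real (d2 i)) * mat_adjoint V"
  shows "U * mat_diag n (\<lambda>i. complex_of_real (g (d1 i))) * mat_adjoint U = V * mat_diag n (\<lambda>i. complex_of_real (g (d2 i))) * mat_adjoint V"
proof -
  have Uc: "U \<in> carrier_mat n n" and Vc: "V \<in> carrier_mat n n" using U V unitary_carrier by auto
  have UU: "mat_adjoint U * U = 1\<^sub>m n" "U * mat_adjoint U = 1\<^sub>m n" using U unitary_left unitary_right by auto
  have VV: "mat_adjoint V * V = 1\<^sub>m n" "V * mat_adjoint V = 1\<^sub>m n" using V unitary_left unitary_right by auto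
  define D1 where "D1 = mat_diag n (\<lambda>i. complex_of_real (d1 i))"
  define D2 where "D2 = mat_diag n (\<lambda>i. complex_of_real (d2 i))"
  define G1 where "G1 = mat_diag n (\<lambda>i. complex_of_real (g (d1 i)))"
  define G2 where "G2 = mat_diag n (\<lambda>i. complex_of_real (g (d2 i)))"
  define W where "W = mat_adjoint V * U"
  have W: "W \<in> carrier_mat n n" unfolding W_def using sq_mult[OF sq_adj[OF Vc] Uc] .
  have Ua: "mat_adjoint U \<in> carrier_mat n n" and Va: "mat_adjoint V \<in> carrier_mat n n" using Uc Vc by auto
  have canc: "X \<in> carrier_mat n n \<Longrightarrow> mat_adjoint U * (U * X) = X"
     "X \<in> carrier_mat n n \<Longrightarrow> U * (mat_adjoint U * X) = X"
     "X \<in> carrier_mat n n \<Longrightarrow> mat_adjoint V * (V * X) = X"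
     "X \<in> carrier_mat n n \<Longrightarrow> V * (mat_adjoint V * X) = X" for X
    using assoc_mult_mat[OF Ua Uc, of X n] assoc_mult_mat[OF Uc Ua, of X n]
      assoc_mult_mat[OF Va Vc, of X n] assoc_mult_mat[OF Vc Va, of X n] UU VV by auto
  note sq = assoc_mult_mat[of _ n n _ n _ n] sq_mult sq_adj sq_diag Uc Vc Ua Va canc UU VV right_mult_one_mat[OF sq_diag[of n]] right_mult_one_mat[OF Ua] right_mult_one_mat[OF Va]
  have e1: "W * D1 = mat_adjoint V * (U * D1 * mat_adjoint U) * U"
    unfolding W_def D1_def by (simp add: sq)
  have e2: "D2 * W = mat_adjoint V * (V * D2 * mat_adjoint V) * U"
    unfolding W_def D2_def by (simp add: sq)
  have "mat_adjoint V * (U * D1 * mat_adjoint U) * U = mat_adjoint V * (V * D2 * mat_adjoint V) * U"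
    unfolding D1_def D2_def eq ..
  hence WD: "W * D1 = D2 * W" unfolding e1[symmetric] e2[symmetric] .
  have ent: "i < n \<Longrightarrow> j < n \<Longrightarrow> W $$ (i,j) * complex_of_real (d1 j) = complex_of_real (d2 i) * W $$ (i,j)" for i j
    using arg_cong[OF WD, of "\<lambda>M. M $$ (i,j)"] unfolding D1_def D2_def
    using mat_diag_mult_right[OF W] mat_diag_mult_left[OF W] by auto
  have WG: "W * G1 = G2 * W"
  proof (rule eq_matI)
    fix i j assume i: "i < dim_row (G2 * W)" and j: "j < dim_col (G2 * W)"
    hence i: "i < n" and j: "j < n" using W by (auto simp: G2_def mat_diag_def)
    have "W $$ (i,j) * complex_of_real (g (d1 j)) = complex_of_real (g (d2 i)) * W $$ (i,j)"
    proof (cases "W $$ (i,j) = 0")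
      case False
      with ent[OF i j] have "d1 j = d2 i" by (metis mult.commute mult_cancel_right of_real_eq_iff)
      thus ?thesis by simp
    qed simp
    thus "(W * G1) $$ (i,j) = (G2 * W) $$ (i,j)"
      unfolding G1_def G2_def using mat_diag_mult_right[OF W] mat_diag_mult_left[OF W] i j by auto
  qed (use W in \<open>auto simp: G1_def G2_def mat_diag_def\<close>)
  have "U * G1 * mat_adjoint U = V * (W * G1) * mat_adjoint U"
    unfolding W_def G1_def by (simp add: sq)
  also have "\<dots> = V * (G2 * W) * mat_adjoint U" unfolding WG ..
  also have "\<dots> = V * G2 * mat_adjoint V"
    unfolding W_def G2_def by (simp add: sq)
  finally show ?thesis unfolding G1_def G2_def .
qed



lemma qf_diag: assumes U: "(U :: complex mat) \<in> carrier_mat n n" and x: "x \<in> carrier_vec n"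
  shows "conjugate x \<bullet> ((U * mat_diag n f * mat_adjoint U) *\<^sub>v x)
     = (\<Sum>k<n. f k * complex_of_real ((cmod ((mat_adjoint U *\<^sub>v x) $ k))^2))"
proof -
  define y where "y = mat_adjoint U *\<^sub>v x"
  have Ua: "mat_adjoint U \<in> carrier_mat n n" using U by simp
  have y: "y \<in> carrier_vec n" unfolding y_def using Ua x by simp
  have "(U * mat_diag n f * mat_adjoint U) *\<^sub>v x = U *\<^sub>v (mat_diag n f *\<^sub>v y)"
    unfolding y_def using assoc_mult_mat_vec[OF sq_mult[OF U sq_diag] Ua x]
      assoc_mult_mat_vec[OF U sq_diag y[unfolded y_def]] by simp
  also have "U = mat_adjoint (mat_adjoint U)" by simp
  finally have "conjugate x \<bullet> ((U * mat_diag n f * mat_adjoint U) *\<^sub>v x)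
      = conjugate x \<bullet> (mat_adjoint (mat_adjoint U) *\<^sub>v (mat_diag n f *\<^sub>v y))" by simp
  also have "\<dots> = conjugate y \<bullet> (mat_diag n f *\<^sub>v y)"
    unfolding y_def by (rule adjoint_vec[OF Ua x], rule mult_mat_vec_carrier[OF sq_diag y[unfolded y_def]])
  also have "\<dots> = (\<Sum>k<n. cnj (y $ k) * (f k * y $ k))"
    using y by (simp add: scalar_prod_def atLeast0LessThan mat_diag_def row_def if_distrib[of "\<lambda>z. z * _"] sum.delta cong: if_cong)
  also have "\<dots> = (\<Sum>k<n. f k * complex_of_real ((cmod (y $ k))^2))"
    by (intro sum.cong refl) (simp add: complex_mult_cnj cmod_power2 mult_ac)
  finally show ?thesis unfolding y_def .
qed

lemma unit_image: assumes U: "unitary_mat n U" and i: "i < n"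
  shows "mat_adjoint U *\<^sub>v (U *\<^sub>v unit_vec n i) = unit_vec n i"
proof -
  have Uc: "U \<in> carrier_mat n n" using U unitary_carrier by auto
  have "mat_adjoint U *\<^sub>v (U *\<^sub>v unit_vec n i) = (mat_adjoint U * U) *\<^sub>v unit_vec n i"
    using Uc by (intro assoc_mult_mat_vec[symmetric, of _ n n _ n]) auto
  thus ?thesis using unitary_left[OF U] by simp
qed

lemma pd_spectral: assumes X: "pd_mat n X"
  shows "\<exists>U d. unitary_mat n U \<and> (\<forall>i<n. d i > 0) \<and> X = U * mat_diag n (\<lambda>i. complex_of_real (d i)) * mat_adjoint U"
proof -
  have Xc: "X \<in> carrier_mat n n" and h: "hermitian_mat X" using X unfolding pd_mat_def by auto
  obtain U d where U: "unitary_mat n U" and Xe: "X = U * mat_diag n (\<lambda>i. complex_of_real (d i)) * mat_adjoint U"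
    using spectral[OF Xc h] by auto
  have Uc: "U \<in> carrier_mat n n" using U unitary_carrier by auto
  have "d i > 0" if i: "i < n" for i
  proof -
    define x where "x = U *\<^sub>v unit_vec n i"
    have x: "x \<in> carrier_vec n" unfolding x_def using Uc by simp
    have y: "mat_adjoint U *\<^sub>v x = unit_vec n i" unfolding x_def by (rule unit_image[OF U i])
    have x0: "x \<noteq> 0\<^sub>v n"
    proof
      assume "x = 0\<^sub>v n"
      hence "mat_adjoint U *\<^sub>v x = 0\<^sub>v n" using sq_adj[OF Uc] by (intro eq_vecI) (auto simp: scalar_prod_def)
      hence "unit_vec n i $ i = (0\<^sub>v n :: complex vec) $ i" using y by simp
      thus False using i by simp
    qed
    have "conjugate x \<bullet> (X *\<^sub>v x) = (\<Sum>k<n. complex_of_real (d k) * complex_of_real ((cmod (unit_vec n i $ k))^2))"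
      unfolding Xe qf_diag[OF Uc x] y ..
    also have "\<dots> = (\<Sum>k<n. if k = i then complex_of_real (d k) else 0)"
      by (intro sum.cong refl) (auto simp: unit_vec_def)
    also have "\<dots> = complex_of_real (d i)" using i by simp
    finally have "Re (conjugate x \<bullet> (X *\<^sub>v x)) = d i" by simp
    moreover have "Re (conjugate x \<bullet> (X *\<^sub>v x)) > 0" using X x x0 unfolding pd_mat_def by auto
    ultimately show ?thesis by simp
  qed
  thus ?thesis using U Xe by blast
qed

lemma powr_char: assumes U: "unitary_mat n U" and d: "\<forall>i<n. d i > 0"
  and Xe: "X = U * mat_diag n (\<lambda>i. complex_of_real (d i)) * mat_adjoint U"
  shows "mat_powr n X r = U * mat_diag n (\<lambda>i. complex_of_real (d i powr r)) * mat_adjoint U"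
proof -
  define P where "P = (\<lambda>Y. \<exists>U d. unitary_mat n U \<and> (\<forall>i<n. d i > 0) \<and>
      X = U * mat_diag n (\<lambda>i. complex_of_real (d i)) * mat_adjoint U \<and>
      Y = U * mat_diag n (\<lambda>i. complex_of_real (d i powr r)) * mat_adjoint U)"
  have "P (U * mat_diag n (\<lambda>i. complex_of_real (d i powr r)) * mat_adjoint U)"
    unfolding P_def using U d Xe by blast
  hence "P (SOME Y. P Y)" by (rule someI)
  then obtain U' d' where U': "unitary_mat n U'"
    and X': "X = U' * mat_diag n (\<lambda>i. complex_of_real (d' i)) * mat_adjoint U'"
    and Y': "(SOME Y. P Y) = U' * mat_diag n (\<lambda>i. complex_of_real (d' i powr r)) * mat_adjoint U'"
    unfolding P_def by blast
  have "mat_powr n X r = (SOME Y. P Y)" unfolding mat_powr_def P_def ..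
  also have "\<dots> = U * mat_diag n (\<lambda>i. complex_of_real (d i powr r)) * mat_adjoint U"
    unfolding Y' using funcal_unique[OF U' U, of d' d "\<lambda>x. x powr r"] X' Xe by simp
  finally show ?thesis .
qed



lemma tangent_powr:
  fixes x q :: real assumes "x > 0" "q > 0"
  shows "x powr (-q) \<ge> 1 + q * (1 - x)"
proof -
  have "x powr (-q) = exp (-q * ln x)" using assms by (simp add: powr_def)
  also have "\<dots> \<ge> 1 + (-q * ln x)" by (rule exp_ge_add_one_self)
  finally have 1: "x powr (-q) \<ge> 1 - q * ln x" by simp
  have "ln x \<le> x - 1" using assms(1) by (rule ln_le_minus_one)
  hence "q * ln x \<le> q * (x - 1)" using assms by (intro mult_left_mono) auto
  thus ?thesis using 1 by (simp add: algebra_simps)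
qed

lemma jensen_powr:
  fixes w mu :: "'i \<Rightarrow> real" and q :: real
  assumes fin: "finite S" and w0: "\<And>i. i \<in> S \<Longrightarrow> w i \<ge> 0" and w1: "(\<Sum>i\<in>S. w i) = 1"
    and mu: "\<And>i. i \<in> S \<Longrightarrow> mu i > 0" and q: "q > 0"
  shows "(\<Sum>i\<in>S. w i * mu i) > 0"
    and "(\<Sum>i\<in>S. w i * mu i powr (-q)) \<ge> (\<Sum>i\<in>S. w i * mu i) powr (-q)"
proof -
  define a where "a = (\<Sum>i\<in>S. w i * mu i)"
  obtain j where j: "j \<in> S" "w j > 0"
  proof (rule ccontr)
    assume "\<not> thesis"
    hence "\<And>i. i \<in> S \<Longrightarrow> w i = 0" using w0 that by force
    hence "(\<Sum>i\<in>S. w i) = 0" by simp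
    with w1 show False by simp
  qed
  have "a \<ge> w j * mu j" unfolding a_def
    using fin j w0 mu by (intro member_le_sum) (auto intro: mult_nonneg_nonneg less_imp_le)
  moreover have "w j * mu j > 0" using j mu by auto
  ultimately have a: "a > 0" by linarith
  thus "(\<Sum>i\<in>S. w i * mu i) > 0" unfolding a_def .
  have "(\<Sum>i\<in>S. w i * mu i powr (-q)) \<ge> (\<Sum>i\<in>S. w i * (a powr (-q) * (1 + q * (1 - mu i / a))))"
  proof (rule sum_mono)
    fix i assume i: "i \<in> S"
    have "mu i powr (-q) = a powr (-q) * (mu i / a) powr (-q)"
      using a mu[OF i] by (simp add: powr_divide powr_minus field_simps)
    also have "\<dots> \<ge> a powr (-q) * (1 + q * (1 - mu i / a))"
      using tangent_powr[of "mu i / a" q] a mu[OF i] q by (intro mult_left_mono) auto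
    finally show "w i * (a powr (-q) * (1 + q * (1 - mu i / a))) \<le> w i * mu i powr (-q)"
      using w0[OF i] by (intro mult_left_mono) auto
  qed
  also have "(\<Sum>i\<in>S. w i * (a powr (-q) * (1 + q * (1 - mu i / a))))
     = a powr (-q) * ((1 + q) * (\<Sum>i\<in>S. w i) - q / a * (\<Sum>i\<in>S. w i * mu i))"
    by (simp add: sum_distrib_left sum_subtractf algebra_simps sum_distrib_right)
  also have "\<dots> = a powr (-q)" using a w1 unfolding a_def[symmetric] by simp
  finally show "(\<Sum>i\<in>S. w i * mu i powr (-q)) \<ge> (\<Sum>i\<in>S. w i * mu i) powr (-q)" unfolding a_def .
qed

lemma max_bound:
  fixes a q :: real assumes a: "0 < a" "a < 1" and q: "q > 0"
  shows "(1 - a) * a powr q \<le> q powr q / (q + 1) powr (q + 1)"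
proof -
  have l1: "ln ((q+1)*(1-a)) \<le> (q+1)*(1-a) - 1" using a q by (intro ln_le_minus_one) auto
  have l2: "ln ((q+1)*a/q) \<le> (q+1)*a/q - 1" using a q by (intro ln_le_minus_one) auto
  have e1: "ln ((q+1)*(1-a)) = ln (q+1) + ln (1-a)" using a q by (simp add: ln_mult)
  have e2: "ln ((q+1)*a/q) = ln (q+1) + ln a - ln q" using a q by (simp add: ln_mult ln_div)
  have "q * (ln (q+1) + ln a - ln q) \<le> q * ((q+1)*a/q - 1)" using l2 q unfolding e2 by (intro mult_left_mono) auto
  also have "\<dots> = (q+1)*a - q" using q by (simp add: field_simps)
  finally have l2': "q * (ln (q+1) + ln a - ln q) \<le> (q+1)*a - q" .
  have "ln ((1 - a) * a powr q) = ln (1-a) + q * ln a" using a by (simp add: ln_mult ln_powr)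
  also have "\<dots> \<le> q * ln q - (q+1) * ln (q+1)" using l1 l2' e1 by (simp add: algebra_simps)
  also have "\<dots> = ln (q powr q / (q + 1) powr (q + 1))" using q by (simp add: ln_div ln_powr)
  finally show ?thesis using a q by (subst (asm) ln_le_cancel_iff) auto
qed

lemma final_real:
  fixes d yy :: "nat \<Rightarrow> real" and s t q L R3 R4 N :: real
  assumes d: "\<And>k. k < n \<Longrightarrow> d k > 0" and yy: "\<And>k. k < n \<Longrightarrow> yy k \<ge> 0"
    and N: "N = (\<Sum>k<n. yy k)" "N > 0" and s: "s > 0" and t: "t > 0"
    and q: "0 < q" "q \<le> t / s" and L: "L \<ge> 0" and R3: "R3 > 0" and R4: "R4 \<le> N"
    and eq: "(\<Sum>k<n. d k powr s * yy k) + L * (\<Sum>k<n. d k powr (-t) * yy k) + R3 = R4"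
  shows "L < q powr q / (q+1) powr (q+1)"
proof -
  define w where "w = (\<lambda>k. yy k / N)"
  define mu where "mu = (\<lambda>k. d k powr s)"
  define q' where "q' = t / s"
  have q': "q' > 0" unfolding q'_def using s t by simp
  have w0: "\<And>k. k \<in> {..<n} \<Longrightarrow> w k \<ge> 0" unfolding w_def using yy N by auto
  have w1: "(\<Sum>k<n. w k) = 1" unfolding w_def using N by (simp add: sum_divide_distrib[symmetric])
  have mu: "\<And>k. k \<in> {..<n} \<Longrightarrow> mu k > 0" unfolding mu_def using d by (metis lessThan_iff powr_gt_zero less_irrefl)
  note J = jensen_powr[of "{..<n}" w mu q', OF _ w0 w1 mu q']
  define a where "a = (\<Sum>k<n. w k * mu k)"
  have a0: "a > 0" using J(1) unfolding a_def by simp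
  define b where "b = (\<Sum>k<n. w k * mu k powr (-q'))"
  have ab: "a powr (-q') \<le> b" using J(2) unfolding a_def b_def by simp
  have mupow: "mu k powr (-q') = d k powr (-t)" if "k < n" for k
    unfolding mu_def q'_def using d[OF that] s by (simp add: powr_powr)
  have S1: "(\<Sum>k<n. d k powr s * yy k) = N * a" unfolding a_def w_def mu_def
    using N by (simp add: sum_distrib_left field_simps)
  have "(\<Sum>k<n. d k powr (-t) * yy k) = (\<Sum>k<n. N * (w k * mu k powr (-q')))"
    unfolding w_def using N mupow by (intro sum.cong) (auto simp: field_simps)
  hence S2: "(\<Sum>k<n. d k powr (-t) * yy k) = N * b" unfolding b_def by (simp add: sum_distrib_left)
  have "N * a + L * (N * b) < N" using eq R3 R4 unfolding S1 S2 by linarith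
  hence "N * (a + L * b) < N * 1" by (simp add: algebra_simps)
  hence ab1: "a + L * b < 1" using N by simp
  have "L * a powr (-q') \<le> L * b" using ab L by (rule mult_left_mono)
  hence lt: "L * a powr (-q') < 1 - a" using ab1 by linarith
  have "L * a powr (-q') \<ge> 0" using L by simp
  hence a1: "a < 1" using lt by linarith
  have "L * a powr (-q') * a powr q' < (1 - a) * a powr q'" using lt a0 by (intro mult_strict_right_mono) auto
  moreover have "a powr (-q') * a powr q' = 1" using a0 by (simp add: powr_add[symmetric])
  ultimately have L1: "L < (1 - a) * a powr q'" by (simp add: mult.assoc)
  have "a powr q' \<le> a powr q" using q a0 a1 unfolding q'_def by (intro powr_mono') auto
  hence "(1 - a) * a powr q' \<le> (1 - a) * a powr q" using a1 by (intro mult_left_mono) auto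
  also have "\<dots> \<le> q powr q / (q + 1) powr (q + 1)" using max_bound[OF a0 a1 q(1)] .
  finally show ?thesis using L1 by linarith
qed



lemma qf_sandwich: assumes C: "(C :: complex mat) \<in> carrier_mat n n" and M: "M \<in> carrier_mat n n"
  and x: "x \<in> carrier_vec n"
  shows "conjugate x \<bullet> ((mat_adjoint C * M * C) *\<^sub>v x) = conjugate (C *\<^sub>v x) \<bullet> (M *\<^sub>v (C *\<^sub>v x))"
proof -
  have Ca: "mat_adjoint C \<in> carrier_mat n n" using C by simp
  have "(mat_adjoint C * M * C) *\<^sub>v x = mat_adjoint C *\<^sub>v (M *\<^sub>v (C *\<^sub>v x))"
    using assoc_mult_mat_vec[OF sq_mult[OF Ca M] C x] assoc_mult_mat_vec[OF Ca M mult_mat_vec_carrier[OF C x]] by simp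
  thus ?thesis using adjoint_vec[OF C x] M C x by simp
qed

lemma mat_vec_zero: "(M :: complex mat) \<in> carrier_mat n m \<Longrightarrow> M *\<^sub>v 0\<^sub>v m = 0\<^sub>v n"
  by (intro eq_vecI) (auto simp: scalar_prod_def)

lemma gl_inj: assumes E: "gl_mat n E" and x: "x \<in> carrier_vec n" and x0: "x \<noteq> 0\<^sub>v n"
  shows "E *\<^sub>v x \<noteq> 0\<^sub>v n"
proof
  assume Ex: "E *\<^sub>v x = 0\<^sub>v n"
  have Ec: "E \<in> carrier_mat n n" and inv: "invertible_mat E" using E unfolding gl_mat_def by auto
  then obtain B where EB: "E * B = 1\<^sub>m n" and BE: "B * E = 1\<^sub>m (dim_row B)"
    unfolding invertible_mat_def inverts_mat_def by auto
  have "dim_col B = n" using arg_cong[OF EB, of dim_col] by simp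
  moreover have "dim_row B = n" using arg_cong[OF BE, of dim_col] Ec by simp
  ultimately have Bc: "B \<in> carrier_mat n n" by auto
  have "x = (B * E) *\<^sub>v x" using BE Bc x by simp
  also have "\<dots> = B *\<^sub>v (E *\<^sub>v x)" using Bc Ec x by simp
  also have "\<dots> = 0\<^sub>v n" unfolding Ex by (rule mat_vec_zero[OF Bc])
  finally show False using x0 by simp
qed

lemma unitary_inj: assumes U: "unitary_mat n U" and x: "x \<in> carrier_vec n" and x0: "x \<noteq> 0\<^sub>v n"
  shows "mat_adjoint U *\<^sub>v x \<noteq> 0\<^sub>v n"
proof
  assume h: "mat_adjoint U *\<^sub>v x = 0\<^sub>v n"
  have Uc: "U \<in> carrier_mat n n" using U unitary_carrier by auto
  have Ua: "mat_adjoint U \<in> carrier_mat n n" using Uc by simp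
  have "x = (U * mat_adjoint U) *\<^sub>v x" using unitary_right[OF U] x by simp
  also have "\<dots> = U *\<^sub>v (mat_adjoint U *\<^sub>v x)" using assoc_mult_mat_vec[OF Uc Ua x] .
  also have "\<dots> = 0\<^sub>v n" unfolding h by (rule mat_vec_zero[OF Uc])
  finally show False using x0 by simp
qed

lemma sum_sq_pos: assumes y: "(y :: complex vec) \<in> carrier_vec n" and y0: "y \<noteq> 0\<^sub>v n"
  and f: "\<And>k. k < n \<Longrightarrow> f k > 0"
  shows "(\<Sum>k<n. f k * (cmod (y$k))^2) > 0"
proof -
  have fn: "\<And>k. k<n \<Longrightarrow> 0 \<le> f k * (cmod (y$k))^2" using f by (simp add: less_imp_le)
  obtain j where j: "j < n" "y $ j \<noteq> 0" using y y0 by (metis carrier_vecD eq_vecI index_zero_vec(1) index_zero_vec(2))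
  have "(\<Sum>k<n. f k * (cmod (y$k))^2) \<ge> f j * (cmod (y$j))^2"
    by (rule member_le_sum) (use j fn in auto)
  moreover have "f j * (cmod (y$j))^2 > 0" using j f by auto
  ultimately show ?thesis by linarith
qed

lemma vec_unit_norm: assumes U: "unitary_mat n U" and x: "x \<in> carrier_vec n"
  shows "conjugate x \<bullet> x = complex_of_real (\<Sum>k<n. (cmod ((mat_adjoint U *\<^sub>v x) $ k))^2)"
proof -
  have Uc: "U \<in> carrier_mat n n" using U unitary_carrier by auto
  have "U * mat_diag n (\<lambda>i. 1) * mat_adjoint U = 1\<^sub>m n" using unitary_right[OF U] Uc by simp
  hence "conjugate x \<bullet> x = conjugate x \<bullet> ((U * mat_diag n (\<lambda>i. 1) * mat_adjoint U) *\<^sub>v x)" using x by simp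
  also have "\<dots> = (\<Sum>k<n. 1 * complex_of_real ((cmod ((mat_adjoint U *\<^sub>v x) $ k))^2))"
    by (rule qf_diag[OF Uc x])
  finally show ?thesis by simp
qed

lemma eig_le: assumes V: "unitary_mat n V" and Qe: "Q = V * mat_diag n (\<lambda>i. complex_of_real (e i)) * mat_adjoint V"
  and lm: "lambda_max Q \<le> 1" and k: "k < n"
  shows "e k \<le> 1"
proof -
  have Vc: "V \<in> carrier_mat n n" using V unitary_carrier by auto
  have Va: "mat_adjoint V \<in> carrier_mat n n" using Vc by simp
  have Qc: "Q \<in> carrier_mat n n" unfolding Qe using sq_mult[OF sq_mult[OF Vc sq_diag] Va] .
  define u :: "complex vec" where "u = unit_vec n k"
  have u: "u \<in> carrier_vec n" unfolding u_def by simp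
  define v where "v = V *\<^sub>v u"
  have v: "v \<in> carrier_vec n" unfolding v_def using Vc u by simp
  have v0: "v \<noteq> 0\<^sub>v n"
  proof
    assume "v = 0\<^sub>v n"
    hence "mat_adjoint V *\<^sub>v v = 0\<^sub>v n" using mat_vec_zero[OF Va] by simp
    hence "u $ k = (0\<^sub>v n :: complex vec) $ k" using unit_image[OF V k] unfolding v_def u_def by simp
    thus False using k unfolding u_def by simp
  qed
  have Du: "mat_diag n (\<lambda>i. complex_of_real (e i)) *\<^sub>v u = complex_of_real (e k) \<cdot>\<^sub>v u"
    unfolding u_def using k by (intro eq_vecI) (auto simp: mat_diag_def scalar_prod_def unit_vec_def if_distrib[of "\<lambda>z. z * _"] sum.delta cong: if_cong)
  have "Q *\<^sub>v v = V *\<^sub>v (mat_diag n (\<lambda>i. complex_of_real (e i)) *\<^sub>v (mat_adjoint V *\<^sub>v v))"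
    unfolding Qe using assoc_mult_mat_vec[OF sq_mult[OF Vc sq_diag] Va v]
      assoc_mult_mat_vec[OF Vc sq_diag mult_mat_vec_carrier[OF Va v]] by simp
  also have "mat_adjoint V *\<^sub>v v = u" unfolding v_def u_def by (rule unit_image[OF V k])
  also have "V *\<^sub>v (mat_diag n (\<lambda>i. complex_of_real (e i)) *\<^sub>v u) = complex_of_real (e k) \<cdot>\<^sub>v v"
    unfolding Du v_def by (rule mult_mat_vec[OF Vc u])
  finally have "eigenvector Q v (complex_of_real (e k))" unfolding eigenvector_def using Qc v v0 by auto
  hence sp: "complex_of_real (e k) \<in> spectrum Q" unfolding spectrum_def eigenvalue_def by auto
  have "e k = Re (complex_of_real (e k))" by simp
  also have "\<dots> \<le> lambda_max Q" unfolding lambda_max_def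
    using card_finite_spectrum(1)[OF Qc] sp by (intro Max_ge) (auto intro!: image_eqI[where x="complex_of_real (e k)"])
  finally show ?thesis using lm by simp
qed

lemma key:
  fixes s t p q :: real and C E U V :: "complex mat" and d e :: "nat \<Rightarrow> real"
  assumes n: "n > 0" and s: "s \<ge> 1" and t: "t \<ge> 1" and p: "p \<ge> 1" and q: "0 < q" "q \<le> t / s"
    and C: "C \<in> carrier_mat n n" and E: "gl_mat n E"
    and U: "unitary_mat n U" and d: "\<forall>i<n. d i > 0"
    and V: "unitary_mat n V" and e: "\<forall>i<n. e i \<le> 1"
    and Pdef: "\<And>r. P r = U * mat_diag n (\<lambda>i. complex_of_real (d i powr r)) * mat_adjoint U"
    and eq: "P s + mat_adjoint C * P (-t) * C + mat_adjoint E * P (-p) * E = V * mat_diag n (\<lambda>i. complex_of_real (e i)) * mat_adjoint V"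
  shows "(spectral_radius C)\<^sup>2 < q powr q / (q+1) powr (q+1)"
proof -
  have Uc: "U \<in> carrier_mat n n" using U unitary_carrier by auto
  have Vc: "V \<in> carrier_mat n n" using V unitary_carrier by auto
  have Ec: "E \<in> carrier_mat n n" using E unfolding gl_mat_def by auto
  have Ua: "mat_adjoint U \<in> carrier_mat n n" using Uc by simp
  have Va: "mat_adjoint V \<in> carrier_mat n n" using Vc by simp
  have Ca: "mat_adjoint C \<in> carrier_mat n n" using C by simp
  have Ea: "mat_adjoint E \<in> carrier_mat n n" using Ec by simp
  have Pc: "P r \<in> carrier_mat n n" for r unfolding Pdef using sq_mult[OF sq_mult[OF Uc sq_diag] Ua] .
  obtain lam where lam: "spectral_radius C = cmod lam" "lam \<in> spectrum C"
    using spectral_radius_mem_max(1)[OF C n] by auto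
  obtain x where x: "x \<in> carrier_vec n" "x \<noteq> 0\<^sub>v n" "C *\<^sub>v x = lam \<cdot>\<^sub>v x"
    using lam(2) C unfolding spectrum_def eigenvalue_def eigenvector_def by auto
  define qf where "qf M = conjugate x \<bullet> (M *\<^sub>v x)" for M
  have qadd: "qf (M1 + M2) = qf M1 + qf M2" if "M1 \<in> carrier_mat n n" "M2 \<in> carrier_mat n n" for M1 M2
    unfolding qf_def using that x
    by (simp add: add_mult_distrib_mat_vec[of _ n n] scalar_prod_add_distrib[of _ n])
  have M2: "mat_adjoint C * P (-t) * C \<in> carrier_mat n n" using sq_mult[OF sq_mult[OF Ca Pc] C] .
  have M3: "mat_adjoint E * P (-p) * E \<in> carrier_mat n n" using sq_mult[OF sq_mult[OF Ea Pc] Ec] .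
  define y where "y = mat_adjoint U *\<^sub>v x"
  define z where "z = mat_adjoint U *\<^sub>v (E *\<^sub>v x)"
  define w where "w = mat_adjoint V *\<^sub>v x"
  have Ex: "E *\<^sub>v x \<in> carrier_vec n" using Ec x by simp
  have q1: "qf (P r) = complex_of_real (\<Sum>k<n. d k powr r * (cmod (y $ k))^2)" for r
    unfolding qf_def Pdef qf_diag[OF Uc x(1)] y_def by (simp add: of_real_sum)
  have lc: "cnj lam * lam = complex_of_real ((cmod lam)^2)" by (metis complex_norm_square mult.commute)
  have "qf (mat_adjoint C * P (-t) * C) = conjugate (lam \<cdot>\<^sub>v x) \<bullet> (P (-t) *\<^sub>v (lam \<cdot>\<^sub>v x))"
    unfolding qf_def qf_sandwich[OF C Pc x(1)] x(3) ..
  also have "\<dots> = cnj lam * lam * qf (P (-t))"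
    unfolding qf_def using x Pc[of "-t"]
    by (simp add: conjugate_smult_vec mult_mat_vec[of _ n n] scalar_prod_smult_distrib[of _ n] smult_scalar_prod_distrib[of _ n])
  finally have q2: "qf (mat_adjoint C * P (-t) * C) = complex_of_real ((cmod lam)^2 * (\<Sum>k<n. d k powr (-t) * (cmod (y $ k))^2))"
    unfolding q1 lc of_real_mult .
  have q3: "qf (mat_adjoint E * P (-p) * E) = complex_of_real (\<Sum>k<n. d k powr (-p) * (cmod (z $ k))^2)"
    unfolding qf_def by (subst qf_sandwich[OF Ec Pc x(1)]) (simp only: Pdef qf_diag[OF Uc Ex] z_def, simp add: of_real_sum)
  have q4: "qf (V * mat_diag n (\<lambda>i. complex_of_real (e i)) * mat_adjoint V) = complex_of_real (\<Sum>k<n. e k * (cmod (w $ k))^2)"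
    unfolding qf_def qf_diag[OF Vc x(1)] w_def by (simp add: of_real_sum)
  have "qf (P s + mat_adjoint C * P (-t) * C + mat_adjoint E * P (-p) * E)
      = qf (P s) + qf (mat_adjoint C * P (-t) * C) + qf (mat_adjoint E * P (-p) * E)"
    using qadd[OF add_carrier_mat[OF M2, of "P s"] M3] qadd[OF Pc M2] by simp
  hence "complex_of_real ((\<Sum>k<n. d k powr s * (cmod (y $ k))^2) + (cmod lam)^2 * (\<Sum>k<n. d k powr (-t) * (cmod (y $ k))^2)
      + (\<Sum>k<n. d k powr (-p) * (cmod (z $ k))^2)) = complex_of_real (\<Sum>k<n. e k * (cmod (w $ k))^2)"
    unfolding eq q1 q2 q3 q4 by simp
  hence req: "(\<Sum>k<n. d k powr s * (cmod (y $ k))^2) + (cmod lam)^2 * (\<Sum>k<n. d k powr (-t) * (cmod (y $ k))^2)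
      + (\<Sum>k<n. d k powr (-p) * (cmod (z $ k))^2) = (\<Sum>k<n. e k * (cmod (w $ k))^2)"
    using of_real_eq_iff by blast
  define N where "N = (\<Sum>k<n. (cmod (y $ k))^2)"
  have Nw: "(\<Sum>k<n. (cmod (w $ k))^2) = N"
    using vec_unit_norm[OF U x(1)] vec_unit_norm[OF V x(1)] unfolding N_def y_def w_def
    using of_real_eq_iff by metis
  have ek: "e k * (cmod (w $ k))^2 \<le> (cmod (w $ k))^2" if "k < n" for k
    using mult_right_mono[of "e k" 1 "(cmod (w $ k))^2"] e that by simp
  have R4: "(\<Sum>k<n. e k * (cmod (w $ k))^2) \<le> N"
    unfolding Nw[symmetric] by (rule sum_mono) (use ek in auto)
  have y: "y \<in> carrier_vec n" "y \<noteq> 0\<^sub>v n" unfolding y_def using Ua x unitary_inj[OF U x(1) x(2)] by auto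
  have z: "z \<in> carrier_vec n" "z \<noteq> 0\<^sub>v n" unfolding z_def using Ua Ex unitary_inj[OF U Ex gl_inj[OF E x(1) x(2)]] by auto
  have R3: "(\<Sum>k<n. d k powr (-p) * (cmod (z $ k))^2) > 0"
    by (rule sum_sq_pos[OF z]) (use d in auto)
  have Npos: "N > 0" unfolding N_def using sum_sq_pos[OF y, of "\<lambda>_. 1"] by simp
  have "(cmod lam)^2 < q powr q / (q+1) powr (q+1)"
    by (rule final_real[of n d "\<lambda>k. (cmod (y $ k))^2" N s t q, OF _ _ N_def Npos _ _ q _ R3 R4 req])
      (use d s t in auto)
  thus ?thesis unfolding lam(1) .
qed



theorem mainTheorem2:
  fixes n :: nat and s t p :: real and A B Q :: "complex mat"
  assumes "n > 0"
    and "s \<ge> 1" and "t \<ge> 1" and "p \<ge> 1"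
    and "gl_mat n A" and "gl_mat n B"
    and "pd_mat n Q" and "lambda_max Q \<le> 1"
    and "\<exists>X. pd_mat n X \<and>
           mat_powr n X s + mat_adjoint A * mat_powr n X (- t) * A
             + mat_adjoint B * mat_powr n X (- p) * B = Q"
  shows "(spectral_radius A)\<^sup>2 < min (t / s) (p / s) powr min (t / s) (p / s)
           / (min (t / s) (p / s) + 1) powr (min (t / s) (p / s) + 1)
       \<and> (spectral_radius B)\<^sup>2 < min (t / s) (p / s) powr min (t / s) (p / s)
           / (min (t / s) (p / s) + 1) powr (min (t / s) (p / s) + 1)"
proof -
  note n = assms(1) and s = assms(2) and t = assms(3) and p = assms(4)
  obtain X where X: "pd_mat n X" and eqX: "mat_powr n X s + mat_adjoint A * mat_powr n X (- t) * A
             + mat_adjoint B * mat_powr n X (- p) * B = Q" using assms(9) by blast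
  obtain U d where U: "unitary_mat n U" and d: "\<forall>i<n. d i > 0"
    and Xe: "X = U * mat_diag n (\<lambda>i. complex_of_real (d i)) * mat_adjoint U"
    using pd_spectral[OF X] by blast
  obtain V e where V: "unitary_mat n V" and Qe: "Q = V * mat_diag n (\<lambda>i. complex_of_real (e i)) * mat_adjoint V"
    using pd_spectral[OF assms(7)] by blast
  have e: "\<forall>i<n. e i \<le> 1" using eig_le[OF V Qe assms(8)] by blast
  have Pdef: "\<And>r. mat_powr n X r = U * mat_diag n (\<lambda>i. complex_of_real (d i powr r)) * mat_adjoint U"
    by (rule powr_char[OF U d Xe])
  define q where "q = min (t / s) (p / s)"
  have q0: "q > 0" unfolding q_def using s t p by simp
  have Ac: "A \<in> carrier_mat n n" and Bc: "B \<in> carrier_mat n n" using assms(5,6) unfolding gl_mat_def by auto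
  have Uc: "U \<in> carrier_mat n n" using U unitary_carrier by auto
  have Pc: "mat_powr n X r \<in> carrier_mat n n" for r
    unfolding Pdef using sq_mult[OF sq_mult[OF Uc sq_diag] sq_adj[OF Uc]] .
  have M1: "mat_adjoint A * mat_powr n X (- t) * A \<in> carrier_mat n n"
    using sq_mult[OF sq_mult[OF sq_adj[OF Ac] Pc] Ac] .
  have M2: "mat_adjoint B * mat_powr n X (- p) * B \<in> carrier_mat n n"
    using sq_mult[OF sq_mult[OF sq_adj[OF Bc] Pc] Bc] .
  have eqA: "mat_powr n X s + mat_adjoint A * mat_powr n X (- t) * A
             + mat_adjoint B * mat_powr n X (- p) * B = V * mat_diag n (\<lambda>i. complex_of_real (e i)) * mat_adjoint V"
    using eqX Qe by simp
  have eqB: "mat_powr n X s + mat_adjoint B * mat_powr n X (- p) * B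
             + mat_adjoint A * mat_powr n X (- t) * A = V * mat_diag n (\<lambda>i. complex_of_real (e i)) * mat_adjoint V"
    unfolding eqA[symmetric] assoc_add_mat[OF Pc M1 M2] assoc_add_mat[OF Pc M2 M1] comm_add_mat[OF M1 M2] ..
  have "(spectral_radius A)\<^sup>2 < q powr q / (q+1) powr (q+1)"
    by (rule key[OF n s t p q0 _ Ac assms(6) U d V e Pdef eqA]) (simp add: q_def)
  moreover have "(spectral_radius B)\<^sup>2 < q powr q / (q+1) powr (q+1)"
    by (rule key[OF n s p t q0 _ Bc assms(5) U d V e Pdef eqB]) (simp add: q_def)
  ultimately show ?thesis unfolding q_def by simp
qed


end
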